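(* Let $\gamma$ be a meromorphic family in $\mathrm{GL}_n(\mathbb C)$ with exponents $m_1\ge\dots\ge m_n$, let $k_1>\dots>k_\tau$ be the distinct values among the $m_i$, and let $\alpha_j$ be the number of indices $i$ with $m_i=k_j$. Then (a) for each $j$ the limit $P_j:=\lim_{z\to0}\mathrm{graph}(z^{k_j}\gamma(z))$ exists in the Grassmannian $\mathrm{Gr}_n$ of $n$-dimensional subspaces of $\mathbb C^n\oplus\mathbb C^n$, and $\mathrm{rk}\,P_j=\alpha_j$; (b) the collection $\mathcal P^\gamma=(P_1,\dots,P_\tau)$ is a hinge.
   Context: A meromorphic family is a map $\gamma$ from a punctured disc $0<|z|<\varepsilon$ to $\mathrm{GL}_n(\mathbb C)$ whose matrix entries are holomorphic there with poles or removable singularities at $0$. Every such $\gamma$ can be written $\gamma(z)=a(z)\,\mathrm{diag}(z^{-m_1},\dots,z^{-m_n})\,b(z)$ with $a,b$ holomorphic near $0$ with $a(0),b(0)$ invertible and integers $m_1\ge\dots\ge m_n$ uniquely determined by $\gamma$; these are the exponents. For a subspace (linear relation) $P\subset V\oplus V$, $V=\mathbb C^n$: $\mathrm{Ker}\,P=\{v:v\oplus0\in P\}$, $\mathrm{Dom}\,P$ and $\mathrm{Im}\,P$ are the projections of $P$ to the first and second summands, $\mathrm{Indef}\,P=\{w:0\oplus w\in P\}$, $\mathrm{rk}\,P=\dim\mathrm{Dom}\,P-\dim\mathrm{Ker}\,P$. A hinge is a sequence $(P_1,\dots,P_k)$ of $n$-dimensional subspaces of $V\oplus V$ such that $\mathrm{Ker}\,P_j=\mathrm{Dom}\,P_{j+1}$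 and $\mathrm{Im}\,P_j=\mathrm{Indef}\,P_{j+1}$ for $1\le j\le k-1$, $\mathrm{Dom}\,P_1=V$, $\mathrm{Im}\,P_k=V$, and $\mathrm{rk}\,P_j>0$ for all $j$. *)

theory Defs
  imports "HOL-Complex_Analysis.Complex_Analysis"
begin

type_synonym 'n cmat = "complex ^'n ^'n"
type_synonym 'n rel = "((complex ^'n) \<times> (complex ^'n)) set"

definition pscale :: "complex \<Rightarrow> (complex ^'n) \<times> (complex ^'n) \<Rightarrow> (complex ^'n) \<times> (complex ^'n)" where
  "pscale c p = (c *s fst p, c *s snd p)"

definition ndim_subspace :: "'n::finite rel \<Rightarrow> bool" where
  "ndim_subspace P \<longleftrightarrow> module.subspace pscale P \<and> vector_space.dim pscale P = CARD('n)"

definition Ker :: "'n::finite rel \<Rightarrow> (complex ^'n) set" where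
  "Ker P = {v. (v, 0) \<in> P}"
definition Dom :: "'n::finite rel \<Rightarrow> (complex ^'n) set" where
  "Dom P = fst ` P"
definition Im :: "'n::finite rel \<Rightarrow> (complex ^'n) set" where
  "Im P = snd ` P"
definition Indef :: "'n::finite rel \<Rightarrow> (complex ^'n) set" where
  "Indef P = {w. (0, w) \<in> P}"
definition rk :: "'n::finite rel \<Rightarrow> int" where
  "rk P = int (vec.dim (Dom P)) - int (vec.dim (Ker P))"

text \<open>A hinge (P_0,...,P_{k-1}) (0-based indexing).\<close>
definition hinge :: "nat \<Rightarrow> (nat \<Rightarrow> 'n::finite rel) \<Rightarrow> bool" where
  "hinge k P \<longleftrightarrow> k \<ge> 1
     \<and> (\<forall>j<k. ndim_subspace (P j))
     \<and> (\<forall>j. j + 1 < k \<longrightarrow> Ker (P j) = Dom (P (j+1)) \<and> Im (P j) = Indef (P (j+1)))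
     \<and> Dom (P 0) = UNIV
     \<and> Im (P (k - 1)) = UNIV
     \<and> (\<forall>j<k. rk (P j) > 0)"

definition frame_span :: "'n::finite cmat \<Rightarrow> 'n cmat \<Rightarrow> 'n rel" where
  "frame_span A B = range (\<lambda>v. (A *v v, B *v v))"
definition full_rank_frame :: "'n::finite cmat \<Rightarrow> 'n cmat \<Rightarrow> bool" where
  "full_rank_frame A B \<longleftrightarrow> inj (\<lambda>v. (A *v v, B *v v))"

text \<open>Convergence in the Grassmannian Gr_n (quotient of full-rank frames by GL_n):
  L(z) \<longrightarrow> P as z \<longrightarrow> 0 iff L(z) admits full-rank frames converging to a full-rank frame of P.\<close>
definition grass_tendsto_0 :: "(complex \<Rightarrow> 'n::finite rel) \<Rightarrow> 'n rel \<Rightarrow> bool" where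
  "grass_tendsto_0 L P \<longleftrightarrow> (\<exists>A B A0 B0.
      (\<forall>\<^sub>F z in at 0. full_rank_frame (A z) (B z) \<and> L z = frame_span (A z) (B z))
      \<and> (A \<longlongrightarrow> A0) (at 0) \<and> (B \<longlongrightarrow> B0) (at 0)
      \<and> full_rank_frame A0 B0 \<and> P = frame_span A0 B0)"

definition mscale :: "complex \<Rightarrow> 'n::finite cmat \<Rightarrow> 'n cmat" where
  "mscale c M = (\<chi> i j. c * M $ i $ j)"

definition graph :: "'n::finite cmat \<Rightarrow> 'n rel" where
  "graph M = {(v, M *v v) | v. True}"

definition diag :: "('n::finite \<Rightarrow> complex) \<Rightarrow> 'n cmat" where
  "diag d = (\<chi> i j. if i = j then d i else 0)"

definition meromorphic_family :: "(complex \<Rightarrow> 'n::finite cmat) \<Rightarrow> bool" where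
  "meromorphic_family \<gamma> \<longleftrightarrow> (\<exists>\<epsilon>>0.
      (\<forall>z. 0 < norm z \<and> norm z < \<epsilon> \<longrightarrow> invertible (\<gamma> z))
      \<and> (\<forall>i j. (\<lambda>z. \<gamma> z $ i $ j) holomorphic_on (ball 0 \<epsilon> - {0})
               \<and> not_essential (\<lambda>z. \<gamma> z $ i $ j) 0))"

text \<open>e gives the exponents of \<gamma> (as a family indexed by 'n; the ordered list m_1 \<ge> ... \<ge> m_n
  is its decreasing rearrangement): \<gamma>(z) = a(z) diag(z^{-e i}) b(z) near 0.\<close>
definition has_exponents :: "(complex \<Rightarrow> 'n::finite cmat) \<Rightarrow> ('n \<Rightarrow> int) \<Rightarrow> bool" where
  "has_exponents \<gamma> e \<longleftrightarrow> (\<exists>r>0. \<exists>a b.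
      (\<forall>i j. (\<lambda>z. a z $ i $ j) holomorphic_on ball 0 r \<and> (\<lambda>z. b z $ i $ j) holomorphic_on ball 0 r)
      \<and> invertible (a 0) \<and> invertible (b 0)
      \<and> (\<forall>z. 0 < norm z \<and> norm z < r \<longrightarrow>
             \<gamma> z = a z ** diag (\<lambda>i. z powi (- e i)) ** b z))"

end

theory Submission
  imports Defs
begin


lemma matrix_inv_props:
  fixes A :: "'a::field^'n^'n"
  assumes "invertible A"
  shows "A ** matrix_inv A = mat 1" "matrix_inv A ** A = mat 1"
proof -
  have "\<exists>A'. A ** A' = mat 1 \<and> A' ** A = mat 1" using assms unfolding invertible_def by blast
  then have "A ** matrix_inv A = mat 1 \<and> matrix_inv A ** A = mat 1"
    unfolding matrix_inv_def by (rule someI_ex)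
  then show "A ** matrix_inv A = mat 1" "matrix_inv A ** A = mat 1" by auto
qed

lemma invertible_matrix_inv:
  fixes A :: "'a::field^'n^'n"
  assumes "invertible A" shows "invertible (matrix_inv A)"
  using matrix_inv_props[OF assms] unfolding invertible_def by blast

lemma inv_mv_cancel:
  fixes A :: "'a::field^'n^'n"
  assumes "invertible A"
  shows "matrix_inv A *v (A *v v) = v" "A *v (matrix_inv A *v v) = v"
  using matrix_inv_props[OF assms]
  by (simp_all add: matrix_vector_mul_assoc)

lemma invertible_inj:
  fixes A :: "'a::field^'n^'n"
  assumes "invertible A" "A *v v = A *v w" shows "v = w"
  by (metis assms inv_mv_cancel(1))

lemma invertible_surj:
  fixes A :: "'a::field^'n^'n"
  assumes "invertible A" shows "range ((*v) A) = UNIV"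
  by (metis assms inv_mv_cancel(2) surj_def)

lemma tendsto_matrix_mult:
  fixes A B :: "'b \<Rightarrow> 'a::real_normed_field^'n^'n"
  assumes "(A \<longlongrightarrow> A0) F" "(B \<longlongrightarrow> B0) F"
  shows "((\<lambda>x. A x ** B x) \<longlongrightarrow> A0 ** B0) F"
  unfolding matrix_matrix_mult_def
  by (intro tendsto_intros tendsto_vec_nth assms)

lemma tendsto_entries:
  fixes A :: "'b \<Rightarrow> 'a::topological_space^'n^'m"
  assumes "\<And>i j. ((\<lambda>x. A x $ i $ j) \<longlongrightarrow> A0 $ i $ j) F"
  shows "(A \<longlongrightarrow> A0) F"
  by (intro vec_tendstoI assms)

lemma tendsto_det:
  fixes A :: "'b \<Rightarrow> 'a::real_normed_field^'n^'n"
  assumes "(A \<longlongrightarrow> A0) F"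
  shows "((\<lambda>x. det (A x)) \<longlongrightarrow> det A0) F"
  unfolding det_def
  by (intro tendsto_intros tendsto_vec_nth assms)

lemma diag_mv: "diag d *v v = (\<chi> i. d i * v $ i)"
proof -
  have "\<And>i. (\<Sum>j\<in>UNIV. (if i = j then d i else 0) * v $ j) = d i * v $ i"
  proof -
    fix i
    have "(\<Sum>j\<in>UNIV. (if i = j then d i else 0) * v $ j) = (\<Sum>j\<in>UNIV. if i = j then d i * v $ j else 0)"
      by (rule sum.cong) auto
    then show "(\<Sum>j\<in>UNIV. (if i = j then d i else 0) * v $ j) = d i * v $ i" by simp
  qed
  then show ?thesis by (simp add: diag_def matrix_vector_mult_def vec_eq_iff)
qed

lemma mscale_mv: "mscale c M *v v = c *s (M *v v)"
  by (simp add: mscale_def matrix_vector_mult_def vec_eq_iff sum_distrib_left mult.assoc)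

lemma tendsto_diag:
  fixes d :: "'b \<Rightarrow> 'n::finite \<Rightarrow> complex"
  assumes "\<And>i. ((\<lambda>x. d x i) \<longlongrightarrow> d0 i) F"
  shows "((\<lambda>x. diag (d x)) \<longlongrightarrow> diag d0) F"
  unfolding diag_def
  apply (intro tendsto_intros)
  subgoal for i j by (cases "i = j") (auto intro: assms)
  done

lemma matrix_inv_cramer:
  fixes A :: "'a::field^'n^'n"
  assumes "det A \<noteq> 0"
  shows "matrix_inv A $ i $ k = det(\<chi> r c. if c = i then axis k 1 $ r else A$r$c) / det A"
proof -
  have inv: "invertible A" using assms invertible_det_nz by blast
  have "A *v (matrix_inv A *v axis k 1) = axis k 1" using inv_mv_cancel(2)[OF inv] .
  then have "matrix_inv A *v axis k 1 = (\<chi> j. det(\<chi> r c. if c = j then axis k 1 $ r else A$r$c) / det A)"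
    using cramer[OF assms] by blast
  moreover have "(matrix_inv A *v axis k 1) $ i = matrix_inv A $ i $ k"
    by (simp add: matrix_vector_mult_def axis_def if_distrib cong: if_cong)
  ultimately show ?thesis by simp
qed

lemma tendsto_matrix_inv:
  fixes A :: "'b \<Rightarrow> 'a::real_normed_field^'n^'n"
  assumes "(A \<longlongrightarrow> A0) F" "invertible A0"
  shows "((\<lambda>x. matrix_inv (A x)) \<longlongrightarrow> matrix_inv A0) F"
proof (rule tendsto_entries)
  fix i k
  have d0: "det A0 \<noteq> 0" using assms(2) invertible_det_nz by blast
  have ev: "eventually (\<lambda>x. det (A x) \<noteq> 0) F"
    using tendsto_det[OF assms(1)] d0 tendsto_imp_eventually_ne by blast
  have lim: "((\<lambda>x. det(\<chi> r c. if c = i then axis k 1 $ r else A x$r$c) / det (A x)) \<longlongrightarrow>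
      det(\<chi> r c. if c = i then axis k 1 $ r else A0$r$c) / det A0) F"
    apply (intro tendsto_intros tendsto_det d0)
    subgoal for r c by (cases "c = i") (auto intro: tendsto_vec_nth[OF tendsto_vec_nth[OF assms(1)]])
    apply (rule assms)
    done
  show "((\<lambda>x. matrix_inv (A x) $ i $ k) \<longlongrightarrow> matrix_inv A0 $ i $ k) F"
    unfolding matrix_inv_cramer[OF d0]
    by (rule Lim_transform_eventually[OF lim]) (use ev in \<open>auto elim!: eventually_mono simp: matrix_inv_cramer\<close>)
qed



lemma powi_key:
  fixes z :: complex and k m :: int
  assumes "z \<noteq> 0"
  shows "z powi k * z powi (- m) * (if m \<le> k then 1 else z ^ nat (m - k)) = (if k \<le> m then 1 else z ^ nat (k - m))"
proof -
  have a: "z powi k * z powi (- m) = z powi (k - m)" using assms by (simp add: power_int_add[symmetric])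
  show ?thesis
  proof (cases "m \<le> k")
    case True
    then have "z powi (k - m) = z ^ nat (k - m)"
      by (metis nat_0_le diff_ge_0_iff_ge power_int_of_nat)
    then show ?thesis using True a by auto
  next
    case False
    have "z powi (k - m) * z ^ nat (m - k) = z powi (k - m) * z powi (m - k)"
      using False by (metis nat_0_le diff_ge_0_iff_ge power_int_of_nat linorder_not_le less_imp_le)
    also have "\<dots> = 1" using assms by (simp add: power_int_add[symmetric])
    finally show ?thesis using False a by auto
  qed
qed

lemma graph_mem: "(v, M *v v) \<in> graph M" by (auto simp: graph_def)
lemma frame_mem: "(A *v w, B *v w) \<in> frame_span A B" by (auto simp: frame_span_def)

lemma pointwise_frame:
  fixes az bz g :: "complex^'n::finite^'n" and e :: "'n \<Rightarrow> int" and k :: int and z :: complex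
  assumes z: "z \<noteq> 0" and ib: "invertible bz"
    and g: "g = az ** diag (\<lambda>i. z powi (- e i)) ** bz"
  defines "s \<equiv> (\<lambda>i. if e i \<le> k then 1 else z ^ nat (e i - k))"
    and "t \<equiv> (\<lambda>i. if k \<le> e i then 1 else z ^ nat (k - e i))"
  shows "full_rank_frame (matrix_inv bz ** diag s) (az ** diag t)
     \<and> graph (mscale (z powi k) g) = frame_span (matrix_inv bz ** diag s) (az ** diag t)"
proof -
  have snz: "s i \<noteq> 0" for i using z by (simp add: s_def)
  have inj: "v = w" if "(matrix_inv bz ** diag s) *v v = (matrix_inv bz ** diag s) *v w" for v w
  proof -
    have "matrix_inv bz *v (diag s *v v) = matrix_inv bz *v (diag s *v w)"
      using that by (simp add: matrix_vector_mul_assoc)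
    then have "diag s *v v = diag s *v w"
      using invertible_inj[OF invertible_matrix_inv[OF ib]] by blast
    then have "\<forall>i. s i * v $ i = s i * w $ i" by (simp add: diag_mv vec_eq_iff)
    then show ?thesis using snz by (simp add: vec_eq_iff)
  qed
  have key: "mscale (z powi k) g *v ((matrix_inv bz ** diag s) *v w) = (az ** diag t) *v w" for w
  proof -
    have "mscale (z powi k) g *v ((matrix_inv bz ** diag s) *v w)
       = z powi k *s (az *v (diag (\<lambda>i. z powi (- e i)) *v (bz *v (matrix_inv bz *v (diag s *v w)))))"
      by (simp add: mscale_mv g matrix_vector_mul_assoc[symmetric] del: matrix_vector_mul_assoc)
    also have "\<dots> = z powi k *s (az *v (diag (\<lambda>i. z powi (- e i)) *v (diag s *v w)))"
      by (simp add: inv_mv_cancel[OF ib] del: matrix_vector_mul_assoc)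
    also have "\<dots> = az *v (z powi k *s (diag (\<lambda>i. z powi (- e i)) *v (diag s *v w)))"
      by (simp add: vec.scale del: matrix_vector_mul_assoc)
    also have "z powi k *s (diag (\<lambda>i. z powi (- e i)) *v (diag s *v w)) = diag t *v w"
      using powi_key[OF z, of k] by (simp add: diag_mv vec_eq_iff s_def t_def mult.assoc[symmetric])
    finally show ?thesis by (simp add: matrix_vector_mul_assoc[symmetric] del: matrix_vector_mul_assoc)
  qed
  have "graph (mscale (z powi k) g) = frame_span (matrix_inv bz ** diag s) (az ** diag t)"
  proof
    show "frame_span (matrix_inv bz ** diag s) (az ** diag t) \<subseteq> graph (mscale (z powi k) g)"
    proof
      fix p assume "p \<in> frame_span (matrix_inv bz ** diag s) (az ** diag t)"
      then obtain w where p: "p = ((matrix_inv bz ** diag s) *v w, (az ** diag t) *v w)"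
        unfolding frame_span_def by blast
      show "p \<in> graph (mscale (z powi k) g)"
      proof -
        have "p = ((matrix_inv bz ** diag s) *v w, mscale (z powi k) g *v ((matrix_inv bz ** diag s) *v w))"
          by (simp only: p key)
        then show ?thesis by (simp only: graph_mem)
      qed
    qed
  next
    show "graph (mscale (z powi k) g) \<subseteq> frame_span (matrix_inv bz ** diag s) (az ** diag t)"
    proof
      fix p assume "p \<in> graph (mscale (z powi k) g)"
      then obtain v where p: "p = (v, mscale (z powi k) g *v v)" unfolding graph_def by auto
      define w where "w = diag (\<lambda>i. 1 / s i) *v (bz *v v)"
      have "diag s *v w = bz *v v" using snz by (simp add: w_def diag_mv vec_eq_iff)
      then have Aw: "(matrix_inv bz ** diag s) *v w = v"
        by (simp add: matrix_vector_mul_assoc[symmetric] inv_mv_cancel[OF ib] del: matrix_vector_mul_assoc)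
      show "p \<in> frame_span (matrix_inv bz ** diag s) (az ** diag t)"
      proof -
        have "p = ((matrix_inv bz ** diag s) *v w, (az ** diag t) *v w)"
          by (simp only: p key[of w, symmetric] Aw)
        then show ?thesis by (simp only: frame_mem)
      qed
    qed
  qed
  moreover have "full_rank_frame (matrix_inv bz ** diag s) (az ** diag t)"
    unfolding full_rank_frame_def inj_def using inj by blast
  ultimately show ?thesis by blast
qed



lemma holo_tendsto0:
  assumes "f holomorphic_on ball 0 r" "r > 0"
  shows "(f \<longlongrightarrow> f 0) (at 0)"
proof -
  have "continuous_on (ball 0 r) f" using assms(1) holomorphic_on_imp_continuous_on by blast
  then have "isCont f 0" using assms(2) continuous_on_interior by fastforce
  then show ?thesis using isCont_def by blast
qed

lemma frame_limit:
  fixes \<gamma> a b :: "complex \<Rightarrow> complex^'n::finite^'n" and e :: "'n \<Rightarrow> int" and k :: int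
  assumes r: "r > 0"
    and hol: "\<forall>i j. (\<lambda>z. a z $ i $ j) holomorphic_on ball 0 r \<and> (\<lambda>z. b z $ i $ j) holomorphic_on ball 0 r"
    and ia: "invertible (a 0)" and ib: "invertible (b 0)"
    and eq: "\<forall>z. 0 < norm z \<and> norm z < r \<longrightarrow> \<gamma> z = a z ** diag (\<lambda>i. z powi (- e i)) ** b z"
  shows "grass_tendsto_0 (\<lambda>z. graph (mscale (z powi k) (\<gamma> z)))
     (frame_span (matrix_inv (b 0) ** diag (\<lambda>i. if e i \<le> k then 1 else 0))
                 (a 0 ** diag (\<lambda>i. if k \<le> e i then 1 else 0)))"
proof -
  define s where "s = (\<lambda>z i. if e i \<le> k then 1 else (z::complex) ^ nat (e i - k))"
  define t where "t = (\<lambda>z i. if k \<le> e i then 1 else (z::complex) ^ nat (k - e i))"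
  define s0 where "s0 = (\<lambda>i. if e i \<le> k then 1 else (0::complex))"
  define t0 where "t0 = (\<lambda>i. if k \<le> e i then 1 else (0::complex))"
  have la: "(a \<longlongrightarrow> a 0) (at 0)"
    by (rule tendsto_entries) (use hol r holo_tendsto0 in blast)
  have lb: "(b \<longlongrightarrow> b 0) (at 0)"
    by (rule tendsto_entries) (use hol r holo_tendsto0 in blast)
  have pw: "((\<lambda>z. z ^ n) \<longlongrightarrow> (0::complex)) (at 0)" if "n > 0" for n
  proof -
    have "((\<lambda>z. z ^ n) \<longlongrightarrow> (0::complex) ^ n) (at 0)" by (intro tendsto_intros)
    then show ?thesis using that by (simp add: power_0_left)
  qed
  have ls: "((\<lambda>z. s z i) \<longlongrightarrow> s0 i) (at 0)" for i
    unfolding s_def s0_def by (cases "e i \<le> k") (auto intro: pw)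
  have lt: "((\<lambda>z. t z i) \<longlongrightarrow> t0 i) (at 0)" for i
    unfolding t_def t0_def by (cases "k \<le> e i") (auto intro: pw)
  have lA: "((\<lambda>z. matrix_inv (b z) ** diag (s z)) \<longlongrightarrow> matrix_inv (b 0) ** diag s0) (at 0)"
    by (intro tendsto_matrix_mult tendsto_matrix_inv lb ib tendsto_diag ls)
  have lB: "((\<lambda>z. a z ** diag (t z)) \<longlongrightarrow> a 0 ** diag t0) (at 0)"
    by (intro tendsto_matrix_mult la tendsto_diag lt)
  have ev1: "eventually (\<lambda>z. det (b z) \<noteq> 0) (at 0)"
    using tendsto_det[OF lb] ib invertible_det_nz tendsto_imp_eventually_ne by blast
  have ev2: "eventually (\<lambda>z. z \<in> ball 0 r) (at (0::complex))"
    using r by (intro eventually_at_in_open') auto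
  have ev3: "eventually (\<lambda>z. z \<noteq> 0) (at (0::complex))"
    by (simp add: eventually_at_filter)
  have ev: "eventually (\<lambda>z. full_rank_frame (matrix_inv (b z) ** diag (s z)) (a z ** diag (t z))
      \<and> graph (mscale (z powi k) (\<gamma> z)) = frame_span (matrix_inv (b z) ** diag (s z)) (a z ** diag (t z))) (at 0)"
    using ev1 ev2 ev3
  proof eventually_elim
    case (elim z)
    then have "\<gamma> z = a z ** diag (\<lambda>i. z powi (- e i)) ** b z" using eq by auto
    moreover have "invertible (b z)" using elim invertible_det_nz by blast
    ultimately show ?case
      using pointwise_frame[of z "b z" "\<gamma> z" "a z" e k] elim unfolding s_def t_def by blast
  qed
  have fr0: "full_rank_frame (matrix_inv (b 0) ** diag s0) (a 0 ** diag t0)"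
    unfolding full_rank_frame_def
  proof (rule injI)
    fix v w
    assume "((matrix_inv (b 0) ** diag s0) *v v, (a 0 ** diag t0) *v v) =
            ((matrix_inv (b 0) ** diag s0) *v w, (a 0 ** diag t0) *v w)"
    then have h1: "matrix_inv (b 0) *v (diag s0 *v v) = matrix_inv (b 0) *v (diag s0 *v w)"
      and h2: "a 0 *v (diag t0 *v v) = a 0 *v (diag t0 *v w)"
      by (simp_all add: matrix_vector_mul_assoc[symmetric] del: matrix_vector_mul_assoc)
    have "diag s0 *v v = diag s0 *v w"
      using invertible_inj[OF invertible_matrix_inv[OF ib] h1] .
    moreover have "diag t0 *v v = diag t0 *v w"
      using invertible_inj[OF ia h2] .
    ultimately have "\<forall>i. s0 i * v $ i = s0 i * w $ i \<and> t0 i * v $ i = t0 i * w $ i"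
      by (simp add: diag_mv vec_eq_iff)
    then show "v = w" unfolding vec_eq_iff s0_def t0_def
      by (metis linorder_le_cases mult_1)
  qed
  show ?thesis
    unfolding grass_tendsto_0_def s0_def[symmetric] t0_def[symmetric]
    apply (rule exI[of _ "\<lambda>z. matrix_inv (b z) ** diag (s z)"])
    apply (rule exI[of _ "\<lambda>z. a z ** diag (t z)"])
    apply (rule exI[of _ "matrix_inv (b 0) ** diag s0"])
    apply (rule exI[of _ "a 0 ** diag t0"])
    using ev lA lB fr0 by blast
qed



lemma vs_pscale: "vector_space (pscale :: complex \<Rightarrow> (complex^'n::finite) \<times> (complex^'n) \<Rightarrow> _)"
  unfolding vector_space_def module_def pscale_def
  by (auto simp: algebra_simps vec.scale_right_distrib vec.scale_left_distrib)

lemma ndim_frame: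
  fixes A B :: "'n::finite cmat"
  assumes "full_rank_frame A B"
  shows "ndim_subspace (frame_span A B)"
proof -
  interpret V: vector_space "pscale :: complex \<Rightarrow> (complex^'n) \<times> (complex^'n) \<Rightarrow> _" by (rule vs_pscale)
  interpret P: finite_dimensional_vector_space_pair_1 "(*s)" cart_basis "pscale :: complex \<Rightarrow> (complex^'n) \<times> (complex^'n) \<Rightarrow> _"
    by unfold_locales
  define f where "f = (\<lambda>v. (A *v v, B *v v))"
  have lin: "Vector_Spaces.linear (*s) pscale f"
    unfolding Vector_Spaces.linear_def module_hom_iff
    by (auto simp: f_def pscale_def vs_pscale vec.vector_space_axioms
         matrix_vector_right_distrib vec.scale V.module_axioms vec.module_axioms)
  have inj: "inj f" using assms unfolding full_rank_frame_def f_def .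
  have sub: "V.subspace (frame_span A B)"
    unfolding frame_span_def f_def[symmetric]
    using P.linear_subspace_image[OF lin, of UNIV] V.subspace_UNIV vec.subspace_UNIV by simp
  have "V.dim (frame_span A B) = vec.dim (UNIV :: (complex^'n) set)"
    unfolding frame_span_def f_def[symmetric]
    by (rule P.dim_image_eq[OF lin]) (use inj in \<open>auto intro: inj_on_subset\<close>)
  also have "\<dots> = CARD('n)" using vec.dim_UNIV card_cart_basis by metis
  finally show ?thesis unfolding ndim_subspace_def using sub by simp
qed



definition sub :: "('n::finite \<Rightarrow> bool) \<Rightarrow> (complex^'n) set" where
  "sub P = {u. \<forall>i. \<not> P i \<longrightarrow> u $ i = 0}"

definition msk :: "('n::finite \<Rightarrow> bool) \<Rightarrow> 'n cmat" where
  "msk P = diag (\<lambda>i. if P i then 1 else 0)"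

lemma msk_mv: "(msk P *v w) $ i = (if P i then w $ i else 0)"
  by (simp add: msk_def diag_mv)

lemma range_msk: "range ((*v) (msk P)) = sub P"
proof
  show "range ((*v) (msk P)) \<subseteq> sub P" by (auto simp: sub_def msk_mv)
next
  show "sub P \<subseteq> range ((*v) (msk P))"
  proof
    fix u assume "u \<in> sub P"
    then have "msk P *v u = u" by (auto simp: sub_def msk_mv vec_eq_iff)
    then show "u \<in> range ((*v) (msk P))" by (metis rangeI)
  qed
qed

lemma sub_UNIV: "(\<And>i. P i) \<Longrightarrow> sub P = UNIV" by (auto simp: sub_def)

lemma dim_sub: "vec.dim (sub P :: (complex^'n::finite) set) = card {i. P i}"
proof -
  define B where "B = (\<lambda>i. axis i (1::complex)) ` {i. P i}"
  have indep: "vec.independent B"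
    by (rule vec.independent_mono[OF independent_cart_basis]) (auto simp: B_def cart_basis_def)
  have "sub P = vec.span B"
  proof
    show "sub P \<subseteq> vec.span B"
    proof
      fix u assume u: "u \<in> sub P"
      have "u = (\<Sum>i\<in>{i. P i}. u $ i *s axis i 1)"
      proof (subst vec_eq_iff, intro allI)
        fix j
        have "(\<Sum>i\<in>{i. P i}. u $ i *s axis i (1::complex)) $ j = (\<Sum>i\<in>{i. P i}. if i = j then u $ j else 0)"
          unfolding sum_component by (rule sum.cong) (auto simp: axis_def)
        also have "\<dots> = u $ j" using u by (auto simp: sub_def)
        finally show "u $ j = (\<Sum>i\<in>{i. P i}. u $ i *s axis i 1) $ j" by simp
      qed
      also have "\<dots> \<in> vec.span B"
        by (intro vec.span_sum vec.span_scale vec.span_base) (auto simp: B_def)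
      finally show "u \<in> vec.span B" .
    qed
  next
    have "vec.subspace (sub P)"
      unfolding vec.subspace_def sub_def by auto
    moreover have "B \<subseteq> sub P" by (auto simp: B_def sub_def axis_def)
    ultimately show "vec.span B \<subseteq> sub P" by (rule vec.span_minimal[rotated])
  qed
  then have "vec.dim (sub P) = card B" using vec.dim_span_eq_card_independent[OF indep] by simp
  also have "card B = card {i. P i}"
    unfolding B_def by (rule card_image) (auto simp: inj_on_def axis_eq_axis)
  finally show ?thesis .
qed

lemma dim_image_inv:
  fixes X :: "'n::finite cmat"
  assumes "invertible X"
  shows "vec.dim ((*v) X ` S) = vec.dim S"
  by (rule vec.dim_image_eq) (use invertible_inj[OF assms] in \<open>auto simp: inj_on_def\<close>)

context
  fixes X Y :: "'n::finite cmat" and p q :: "'n \<Rightarrow> bool"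
  assumes iX: "invertible X" and iY: "invertible Y" and cover: "\<And>i. p i \<or> q i"
begin

definition "PP = frame_span (X ** msk p) (Y ** msk q)"

lemma PP_mem: "(v, w) \<in> PP \<longleftrightarrow> (\<exists>u. v = X *v (msk p *v u) \<and> w = Y *v (msk q *v u))"
  unfolding PP_def frame_span_def by (auto simp del: matrix_vector_mul_assoc simp: matrix_vector_mul_assoc[symmetric])

lemma PP_Dom: "Dom PP = (*v) X ` sub p"
proof -
  have "Dom PP = range (\<lambda>u. X *v (msk p *v u))"
    unfolding Dom_def PP_def frame_span_def
    by (auto simp del: matrix_vector_mul_assoc simp: matrix_vector_mul_assoc[symmetric] image_iff)
  also have "\<dots> = (*v) X ` range ((*v) (msk p))" by auto
  finally show ?thesis by (simp only: range_msk)
qed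

lemma PP_Im: "Im PP = (*v) Y ` sub q"
proof -
  have "Im PP = range (\<lambda>u. Y *v (msk q *v u))"
    unfolding Im_def PP_def frame_span_def
    by (auto simp del: matrix_vector_mul_assoc simp: matrix_vector_mul_assoc[symmetric] image_iff)
  also have "\<dots> = (*v) Y ` range ((*v) (msk q))" by auto
  finally show ?thesis by (simp only: range_msk)
qed

lemma PP_Ker: "Ker PP = (*v) X ` sub (\<lambda>i. p i \<and> \<not> q i)"
proof
  show "Ker PP \<subseteq> (*v) X ` sub (\<lambda>i. p i \<and> \<not> q i)"
  proof
    fix v assume "v \<in> Ker PP"
    then obtain u where v: "v = X *v (msk p *v u)" and z: "0 = Y *v (msk q *v u)"
      unfolding Ker_def PP_mem by auto
    have "Y *v (msk q *v u) = Y *v 0" using z by simp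
    then have "msk q *v u = 0" using invertible_inj[OF iY] by blast
    then have "msk p *v u \<in> sub (\<lambda>i. p i \<and> \<not> q i)"
      by (auto simp: sub_def msk_mv vec_eq_iff split: if_splits)
    then show "v \<in> (*v) X ` sub (\<lambda>i. p i \<and> \<not> q i)" using v by blast
  qed
next
  show "(*v) X ` sub (\<lambda>i. p i \<and> \<not> q i) \<subseteq> Ker PP"
  proof
    fix v assume "v \<in> (*v) X ` sub (\<lambda>i. p i \<and> \<not> q i)"
    then obtain u where v: "v = X *v u" and u: "u \<in> sub (\<lambda>i. p i \<and> \<not> q i)" by blast
    have "msk p *v u = u" "msk q *v u = 0" using u by (auto simp: sub_def msk_mv vec_eq_iff)
    then show "v \<in> Ker PP" unfolding Ker_def PP_mem v by (auto intro!: exI[of _ u])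
  qed
qed

lemma PP_Indef: "Indef PP = (*v) Y ` sub (\<lambda>i. q i \<and> \<not> p i)"
proof
  show "Indef PP \<subseteq> (*v) Y ` sub (\<lambda>i. q i \<and> \<not> p i)"
  proof
    fix v assume "v \<in> Indef PP"
    then obtain u where v: "v = Y *v (msk q *v u)" and z: "0 = X *v (msk p *v u)"
      unfolding Indef_def PP_mem by auto
    have "X *v (msk p *v u) = X *v 0" using z by simp
    then have "msk p *v u = 0" using invertible_inj[OF iX] by blast
    then have "msk q *v u \<in> sub (\<lambda>i. q i \<and> \<not> p i)"
      by (auto simp: sub_def msk_mv vec_eq_iff split: if_splits)
    then show "v \<in> (*v) Y ` sub (\<lambda>i. q i \<and> \<not> p i)" using v by blast
  qed
next
  show "(*v) Y ` sub (\<lambda>i. q i \<and> \<not> p i) \<subseteq> Indef PP"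
  proof
    fix v assume "v \<in> (*v) Y ` sub (\<lambda>i. q i \<and> \<not> p i)"
    then obtain u where v: "v = Y *v u" and u: "u \<in> sub (\<lambda>i. q i \<and> \<not> p i)" by blast
    have "msk q *v u = u" "msk p *v u = 0" using u by (auto simp: sub_def msk_mv vec_eq_iff)
    then show "v \<in> Indef PP" unfolding Indef_def PP_mem v by (auto intro!: exI[of _ u])
  qed
qed

lemma PP_rk: "rk PP = int (card {i. p i \<and> q i})"
proof -
  have "rk PP = int (card {i. p i}) - int (card {i. p i \<and> \<not> q i})"
    unfolding rk_def PP_Dom PP_Ker dim_image_inv[OF iX] dim_sub by simp
  moreover have "card {i. p i} = card {i. p i \<and> \<not> q i} + card {i. p i \<and> q i}"
  proof -
    have "{i. p i} = {i. p i \<and> \<not> q i} \<union> {i. p i \<and> q i}" by auto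
    then show ?thesis by (metis (no_types, lifting) card_Un_disjoint disjoint_iff finite mem_Collect_eq)
  qed
  ultimately show ?thesis by simp
qed

lemma PP_full: "full_rank_frame (X ** msk p) (Y ** msk q)"
  unfolding full_rank_frame_def
proof (rule injI)
  fix v w
  assume "((X ** msk p) *v v, (Y ** msk q) *v v) = ((X ** msk p) *v w, (Y ** msk q) *v w)"
  then have h1: "X *v (msk p *v v) = X *v (msk p *v w)" and h2: "Y *v (msk q *v v) = Y *v (msk q *v w)"
    by (simp_all add: matrix_vector_mul_assoc[symmetric] del: matrix_vector_mul_assoc)
  have "msk p *v v = msk p *v w" using invertible_inj[OF iX h1] .
  moreover have "msk q *v v = msk q *v w" using invertible_inj[OF iY h2] .
  ultimately show "v = w" unfolding vec_eq_iff msk_mv by (metis cover)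
qed

lemma PP_ndim: "ndim_subspace PP"
  unfolding PP_def by (rule ndim_frame[OF PP_full])

end



lemma ks_facts:
  fixes e :: "'n::finite \<Rightarrow> int"
  defines "ks \<equiv> rev (sorted_list_of_set (range e))"
  shows "set ks = range e" "length ks \<ge> 1"
    "\<And>m n. m < n \<Longrightarrow> n < length ks \<Longrightarrow> ks ! n < ks ! m"
proof -
  show s: "set ks = range e" unfolding ks_def by simp
  then have "ks \<noteq> []" by auto
  then show "length ks \<ge> 1" by (cases ks) auto
  have "sorted_wrt (<) (sorted_list_of_set (range e))" by (rule strict_sorted_list_of_set)
  then have "sorted_wrt (>) ks" unfolding ks_def by (simp add: sorted_wrt_rev)
  then show "\<And>m n. m < n \<Longrightarrow> n < length ks \<Longrightarrow> ks ! n < ks ! m"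
    using sorted_wrt_nth_less by blast
qed

lemma ks_gap:
  fixes ks :: "int list"
  assumes dec: "\<And>m n. m < n \<Longrightarrow> n < length ks \<Longrightarrow> ks ! n < ks ! m"
    and x: "x \<in> set ks" and j: "j + 1 < length ks"
  shows "x < ks ! j \<longleftrightarrow> x \<le> ks ! (j + 1)"
proof -
  obtain m where m: "m < length ks" "x = ks ! m" using x by (auto simp: in_set_conv_nth)
  have a: "ks ! (j+1) < ks ! j" using dec j by simp
  show ?thesis
  proof
    assume "x < ks ! j"
    then have "\<not> m \<le> j"
    proof (intro notI)
      assume "m \<le> j"
      then have "m = j \<or> m < j" by auto
      then show False
      proof
        assume "m = j" then show False using \<open>x < ks ! j\<close> m by simp
      next
        assume "m < j" then have "ks ! j < ks ! m" using dec j by simp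
        then show False using \<open>x < ks ! j\<close> m by simp
      qed
    qed
    then have "m = j + 1 \<or> j + 1 < m" by auto
    then show "x \<le> ks ! (j+1)"
    proof
      assume "m = j + 1" then show ?thesis using m by simp
    next
      assume "j + 1 < m" then have "ks ! m < ks ! (j+1)" using dec m(1) by blast
      then show ?thesis using m by simp
    qed
  next
    assume "x \<le> ks ! (j+1)" then show "x < ks ! j" using a by simp
  qed
qed

lemma ks_bounds:
  fixes ks :: "int list"
  assumes dec: "\<And>m n. m < n \<Longrightarrow> n < length ks \<Longrightarrow> ks ! n < ks ! m"
    and x: "x \<in> set ks"
  shows "x \<le> ks ! 0" "ks ! (length ks - 1) \<le> x"
proof -
  obtain m where m: "m < length ks" "x = ks ! m" using x by (auto simp: in_set_conv_nth)
  show "x \<le> ks ! 0"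
  proof (cases "m = 0")
    case True then show ?thesis using m by simp
  next
    case False then have "ks ! m < ks ! 0" using dec[of 0 m] m(1) by simp
    then show ?thesis using m by simp
  qed
  show "ks ! (length ks - 1) \<le> x"
  proof (cases "m = length ks - 1")
    case True then show ?thesis using m by simp
  next
    case False then have "m < length ks - 1" using m(1) by simp
    then have "ks ! (length ks - 1) < ks ! m" using dec[of m "length ks - 1"] m(1) by simp
    then show ?thesis using m by simp
  qed
qed

theorem proposition3p2:
  fixes \<gamma> :: "complex \<Rightarrow> complex ^'n::finite ^'n" and e :: "'n \<Rightarrow> int"
  assumes "meromorphic_family \<gamma>" and "has_exponents \<gamma> e"
  defines "ks \<equiv> rev (sorted_list_of_set (range e))"
  shows "\<exists>P :: nat \<Rightarrow> 'n rel.
           (\<forall>j < length ks.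
              grass_tendsto_0 (\<lambda>z. graph (mscale (z powi (ks ! j)) (\<gamma> z))) (P j)
              \<and> rk (P j) = int (card {i. e i = ks ! j}))
           \<and> hinge (length ks) P"
proof -
  obtain r and a b :: "complex \<Rightarrow> complex^'n^'n" where r: "r > 0"
    and hol: "\<forall>i j. (\<lambda>z. a z $ i $ j) holomorphic_on ball 0 r \<and> (\<lambda>z. b z $ i $ j) holomorphic_on ball 0 r"
    and ia: "invertible (a 0)" and ib: "invertible (b 0)"
    and eq: "\<forall>z. 0 < norm z \<and> norm z < r \<longrightarrow> \<gamma> z = a z ** diag (\<lambda>i. z powi (- e i)) ** b z"
    using assms(2) unfolding has_exponents_def by blast
  define X where "X = matrix_inv (b 0)"
  define Y where "Y = a 0"
  have iX: "invertible X" unfolding X_def by (rule invertible_matrix_inv[OF ib])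
  have iY: "invertible Y" unfolding Y_def by (rule ia)
  define P where "P = (\<lambda>j. PP X Y (\<lambda>i. e i \<le> ks ! j) (\<lambda>i. ks ! j \<le> e i))"
  have cov: "\<And>k i. e i \<le> k \<or> k \<le> e i" by auto
  note kf = ks_facts[where e=e, folded ks_def]
  have ink: "e i \<in> set ks" for i using kf(1) by auto
  have lim: "grass_tendsto_0 (\<lambda>z. graph (mscale (z powi (ks ! j)) (\<gamma> z))) (P j)" for j
    using frame_limit[OF r hol ia ib eq, of "ks ! j"]
    unfolding P_def PP_def[OF iX iY cov[where k="ks ! j"]] unfolding X_def Y_def msk_def .
  have rkP: "rk (P j) = int (card {i. e i = ks ! j})" for j
  proof -
    have "rk (P j) = int (card {i. e i \<le> ks ! j \<and> ks ! j \<le> e i})"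
      unfolding P_def by (rule PP_rk[OF iX iY cov[where k="ks ! j"]])
    also have "{i. e i \<le> ks ! j \<and> ks ! j \<le> e i} = {i. e i = ks ! j}" by auto
    finally show ?thesis .
  qed
  have h1: "1 \<le> length ks" by (rule kf(2))
  have h2: "\<forall>j<length ks. ndim_subspace (P j)"
  proof (intro allI impI)
    fix j show "ndim_subspace (P j)" unfolding P_def by (rule PP_ndim[OF iX iY cov[where k="ks ! j"]])
  qed
  have h3: "\<forall>j. j + 1 < length ks \<longrightarrow> Ker (P j) = Dom (P (j+1)) \<and> Im (P j) = Indef (P (j+1))"
  proof (intro allI impI)
    fix j assume j: "j + 1 < length ks"
    have g: "(e i < ks ! j) = (e i \<le> ks ! (j+1))" for i by (rule ks_gap[OF kf(3) ink j])
    have g1: "(\<lambda>i. e i \<le> ks ! j \<and> \<not> ks ! j \<le> e i) = (\<lambda>i. e i \<le> ks ! (j+1))"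
    proof (rule ext)
      fix i show "(e i \<le> ks ! j \<and> \<not> ks ! j \<le> e i) = (e i \<le> ks ! (j+1))"
        using g[of i] by linarith
    qed
    have g2: "(\<lambda>i. ks ! (j+1) \<le> e i \<and> \<not> e i \<le> ks ! (j+1)) = (\<lambda>i. ks ! j \<le> e i)"
    proof (rule ext)
      fix i show "(ks ! (j+1) \<le> e i \<and> \<not> e i \<le> ks ! (j+1)) = (ks ! j \<le> e i)"
        using g[of i] by linarith
    qed
    have "Ker (P j) = Dom (P (j + 1))"
      unfolding P_def PP_Ker[OF iX iY cov[where k="ks ! j"]] PP_Dom[OF iX iY cov[where k="ks ! (j+1)"]] g1 ..
    moreover have "Im (P j) = Indef (P (j + 1))"
      unfolding P_def PP_Im[OF iX iY cov[where k="ks ! j"]] PP_Indef[OF iX iY cov[where k="ks ! (j+1)"]] g2 ..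
    ultimately show "Ker (P j) = Dom (P (j+1)) \<and> Im (P j) = Indef (P (j+1))" by (rule conjI)
  qed
  have h4: "Dom (P 0) = UNIV"
  proof -
    have "sub (\<lambda>i. e i \<le> ks ! 0) = UNIV" by (rule sub_UNIV) (rule ks_bounds(1)[OF kf(3) ink])
    then show ?thesis
      unfolding P_def PP_Dom[OF iX iY cov[where k="ks ! 0"]] using invertible_surj[OF iX] by simp
  qed
  have h5: "Im (P (length ks - 1)) = UNIV"
  proof -
    have "sub (\<lambda>i. ks ! (length ks - 1) \<le> e i) = UNIV" by (rule sub_UNIV) (rule ks_bounds(2)[OF kf(3) ink])
    then show ?thesis
      unfolding P_def PP_Im[OF iX iY cov[where k="ks ! (length ks - 1)"]] using invertible_surj[OF iY] by simp
  qed
  have h6: "\<forall>j<length ks. 0 < rk (P j)"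
  proof (intro allI impI)
    fix j assume j: "j < length ks"
    have "ks ! j \<in> set ks" by (rule nth_mem[OF j])
    then have "ks ! j \<in> range e" using kf(1) by simp
    then have "{i. e i = ks ! j} \<noteq> {}" by auto
    then have "card {i. e i = ks ! j} > 0" by (simp add: card_gt_0_iff)
    then show "0 < rk (P j)" using rkP by simp
  qed
  have "hinge (length ks) P"
    unfolding hinge_def by (intro conjI h1 h2 h3 h4 h5 h6)
  then show ?thesis using lim rkP by blast
qed

end
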